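(* For every $k\in\mathbb{N}$, the sequence $\{\alpha_k(n)\}_{n=2}^\infty$ defined by $\alpha_k(n)=\dfrac{\ell_k(n)}{\ell_k(n-1)}$ is decreasing and $\lim_{n\to\infty}\dfrac{\ell_k(n)}{\ell_k(n-1)}=1$.
   Context: For $x\ge1$ define $\ell_0(x)=1$, $\ell_1(x)=1+\ln x$, and recursively $\ell_j(x)=1+\ln\ell_{j-1}(x)$ for $j\ge2$. *)

theory Defs
  imports Complex_Main
begin

fun ell :: "nat \<Rightarrow> real \<Rightarrow> real" where
  "ell 0 x = 1"
| "ell (Suc 0) x = 1 + ln x"
| "ell (Suc (Suc j)) x = 1 + ln (ell (Suc j) x)"

definition alpha :: "nat \<Rightarrow> nat \<Rightarrow> real" where
  "alpha k n = ell k (real n) / ell k (real n - 1)"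

end

theory Submission
  imports Defs "HOL-Real_Asymp.Real_Asymp"
begin

definition P :: "nat \<Rightarrow> real \<Rightarrow> real" where
  "P j x = (\<Prod>i<j. ell i x)"

lemma ell_ge1: "x \<ge> 1 \<Longrightarrow> ell j x \<ge> 1"
  by (induction j x rule: ell.induct) auto

lemma ell_mono: "1 \<le> x \<Longrightarrow> x \<le> y \<Longrightarrow> ell j x \<le> ell j y"
proof (induction j x rule: ell.induct)
  case (3 j x)
  then have "ell (Suc j) x \<le> ell (Suc j) y" by simp
  moreover have "ell (Suc j) x \<ge> 1" using 3 ell_ge1 by blast
  ultimately show ?case by simp
qed auto

lemma P_ge1: "x \<ge> 1 \<Longrightarrow> P j x \<ge> 1"
  unfolding P_def by (rule prod_ge_1) (auto intro: ell_ge1)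

lemma P_mono: "1 \<le> x \<Longrightarrow> x \<le> y \<Longrightarrow> P j x \<le> P j y"
  unfolding P_def by (rule prod_mono) (auto intro: ell_mono order_trans[OF zero_le_one] ell_ge1)

lemma P_Suc: "P (Suc j) x = P j x * ell j x"
  unfolding P_def by simp

lemma ell_deriv: "x \<ge> 1 \<Longrightarrow> j \<ge> 1 \<Longrightarrow> DERIV (ell j) x :> 1 / (x * P j x)"
proof (induction j x rule: ell.induct)
  case (2 x)
  have "DERIV (\<lambda>x. 1 + ln x) x :> 0 + 1/x" using 2
    by (intro derivative_intros DERIV_ln_divide) auto
  then show ?case by (simp add: P_def)
next
  case (3 j x)
  have IH: "DERIV (ell (Suc j)) x :> 1 / (x * P (Suc j) x)" using 3 by simp
  have pos: "ell (Suc j) x > 0" using ell_ge1[OF 3(2)] by (meson less_le_trans zero_less_one)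
  have e: "ell (Suc (Suc j)) = (\<lambda>x. 1 + ln (ell (Suc j) x))" by (rule ext) simp
  have "DERIV (\<lambda>x. 1 + ln (ell (Suc j) x)) x :> 0 + (1 / (x * P (Suc j) x)) / ell (Suc j) x"
    using IH pos by (intro derivative_eq_intros) (auto simp: field_simps)
  then show ?case unfolding e by (simp add: P_Suc field_simps)
qed auto

lemma g_deriv: "x \<ge> 1 \<Longrightarrow> j \<ge> 1 \<Longrightarrow> DERIV (\<lambda>x. ln (ell j x)) x :> 1 / (x * P (Suc j) x)"
proof -
  assume a: "x \<ge> 1" "j \<ge> 1"
  have pos: "ell j x > 0" using ell_ge1[OF a(1)] by (meson less_le_trans zero_less_one)
  have "DERIV (\<lambda>x. ln (ell j x)) x :> (1 / (x * P j x)) / ell j x"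
    using ell_deriv[OF a] pos by (intro derivative_eq_intros) (auto simp: field_simps)
  then show ?thesis by (simp add: P_Suc field_simps)
qed

lemma D_anti: "1 \<le> x \<Longrightarrow> x \<le> y \<Longrightarrow> 1 / (y * P j y) \<le> 1 / (x * P j x)"
proof -
  assume a: "1 \<le> x" "x \<le> y"
  have "x * P j x \<le> y * P j y"
    using a P_mono[OF a, of j] P_ge1[OF a(1), of j] by (intro mult_mono) auto
  moreover have "x * P j x > 0" using a P_ge1[OF a(1), of j] by (simp add: zero_less_mult_iff)
  ultimately show ?thesis by (intro divide_left_mono) auto
qed

lemma step_mono:
  assumes "j \<ge> 1" "n \<ge> (2::nat)"
  shows "ln (ell j (real n + 1)) - ln (ell j (real n)) \<le> ln (ell j (real n)) - ln (ell j (real n - 1))"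
proof -
  have n1: "real n - 1 \<ge> 1" using assms by simp
  obtain z1 where z1: "real n < z1" "z1 < real n + 1"
    "ln (ell j (real n + 1)) - ln (ell j (real n)) = (real n + 1 - real n) * (1 / (z1 * P (Suc j) z1))"
    using MVT2[of "real n" "real n + 1" "\<lambda>x. ln (ell j x)" "\<lambda>x. 1 / (x * P (Suc j) x)"]
      g_deriv assms n1 by force
  obtain z2 where z2: "real n - 1 < z2" "z2 < real n"
    "ln (ell j (real n)) - ln (ell j (real n - 1)) = (real n - (real n - 1)) * (1 / (z2 * P (Suc j) z2))"
    using MVT2[of "real n - 1" "real n" "\<lambda>x. ln (ell j x)" "\<lambda>x. 1 / (x * P (Suc j) x)"]
      g_deriv assms n1 by force
  have "1 / (z1 * P (Suc j) z1) \<le> 1 / (z2 * P (Suc j) z2)"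
    using D_anti[of z2 z1] z1 z2 n1 by simp
  then show ?thesis using z1(3) z2(3) by simp
qed

lemma ratio_bound:
  assumes "n \<ge> (2::nat)"
  shows "1 \<le> ell j (real n) / ell j (real n - 1) \<and> ell j (real n) / ell j (real n - 1) \<le> 1 + 1 / (real n - 1)"
proof (cases "j = 0")
  case True then show ?thesis using assms by simp
next
  case False
  then have j: "j \<ge> 1" by simp
  have n1: "real n - 1 \<ge> 1" using assms by simp
  have e1: "ell j (real n - 1) \<ge> 1" using ell_ge1[OF n1] .
  have mono: "ell j (real n - 1) \<le> ell j (real n)" using ell_mono[OF n1] by simp
  obtain z where z: "real n - 1 < z" "z < real n"
    "ell j (real n) - ell j (real n - 1) = (real n - (real n - 1)) * (1 / (z * P j z))"
    using MVT2[of "real n - 1" "real n" "ell j" "\<lambda>x. 1 / (x * P j x)"]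
      ell_deriv j n1 by force
  have "1 / (z * P j z) \<le> 1 / ((real n - 1) * P j (real n - 1))"
    using D_anti[of "real n - 1" z] z n1 by simp
  also have "\<dots> \<le> 1 / (real n - 1)"
    using P_ge1[OF n1] n1 by (simp add: divide_simps)
  finally have d: "ell j (real n) - ell j (real n - 1) \<le> 1 / (real n - 1)" using z(3) by simp
  have "ell j (real n) / ell j (real n - 1) = 1 + (ell j (real n) - ell j (real n - 1)) / ell j (real n - 1)"
    using e1 by (simp add: field_simps)
  also have "\<dots> \<le> 1 + (ell j (real n) - ell j (real n - 1))"
  proof -
    have "(ell j (real n) - ell j (real n - 1)) * 1 \<le> (ell j (real n) - ell j (real n - 1)) * ell j (real n - 1)"
      using e1 mono by (intro mult_left_mono) auto
    then show ?thesis using e1 by (simp add: divide_simps algebra_simps)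
  qed
  finally show ?thesis using d mono e1 by simp
qed

theorem lemma2p3:
  fixes k :: nat
  shows "(\<forall>n\<ge>2. alpha k (Suc n) \<le> alpha k n)
         \<and> (\<lambda>n. ell k (real n) / ell k (real n - 1)) \<longlonglongrightarrow> 1"
proof
  show "\<forall>n\<ge>2. alpha k (Suc n) \<le> alpha k n"
  proof (intro allI impI)
    fix n :: nat assume n: "n \<ge> 2"
    show "alpha k (Suc n) \<le> alpha k n"
    proof (cases "k = 0")
      case True then show ?thesis by (simp add: alpha_def)
    next
      case False
      have n1: "real n - 1 \<ge> 1" using n by simp
      have p0: "ell k (real n - 1) > 0" "ell k (real n) > 0" "ell k (real n + 1) > 0"
        using ell_ge1[OF n1] ell_ge1[of "real n" k] ell_ge1[of "real n + 1" k] n1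
        by (auto intro: less_le_trans[OF zero_less_one])
      have "ln (ell k (real n + 1) / ell k (real n)) \<le> ln (ell k (real n) / ell k (real n - 1))"
        using step_mono[of k n] False n p0 by (simp add: ln_div)
      then have "ell k (real n + 1) / ell k (real n) \<le> ell k (real n) / ell k (real n - 1)"
        using p0 by simp
      then show ?thesis by (simp add: alpha_def add.commute)
    qed
  qed
next
  have lim: "(\<lambda>n. 1 + 1 / (real n - 1)) \<longlonglongrightarrow> (1::real)" by real_asymp
  show "(\<lambda>n. ell k (real n) / ell k (real n - 1)) \<longlonglongrightarrow> 1"
  proof (rule tendsto_sandwich[OF _ _ tendsto_const lim])
    show "\<forall>\<^sub>F n in sequentially. 1 \<le> ell k (real n) / ell k (real n - 1)"
      using eventually_ge_at_top[of 2] by eventually_elim (use ratio_bound in blast)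
    show "\<forall>\<^sub>F n in sequentially. ell k (real n) / ell k (real n - 1) \<le> 1 + 1 / (real n - 1)"
      using eventually_ge_at_top[of 2] by eventually_elim (use ratio_bound in blast)
  qed
qed

end
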